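(* Let $\tau$ denote the divisor function and $$T_n=\sum_{0<k<n}\frac{\tau(k)\tau(n-k)}{\sqrt{n-k}\sqrt{k}}.$$ Then $T_n\ge\frac{6+o(1)}{\pi}(\log n)^2$ as $n\to\infty$. *)

theory Defs
  imports "HOL-Analysis.Analysis"
begin

definition divisor_count :: "nat \<Rightarrow> nat" where
  "divisor_count k = card {d. d dvd k \<and> d > 0}"

definition T :: "nat \<Rightarrow> real" where
  "T n = (\<Sum>k\<in>{0<..<n}. real (divisor_count k) * real (divisor_count (n - k))
                          / (sqrt (real (n - k)) * sqrt (real k)))"

end

theory Submission
  imports Defs "HOL-Number_Theory.Cong"
begin

definition wt :: "real \<Rightarrow> real \<Rightarrow> real" where
  "wt n t = 1 / sqrt (t * (n - t))"

definition FF :: "real \<Rightarrow> real \<Rightarrow> real" where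
  "FF n t = arcsin (2 * t / n - 1)"

lemma FF_deriv:
  assumes "0 < t" "t < n"
  shows "DERIV (FF n) t :> wt n t"
proof -
  have n: "n > 0" using assms by simp
  have u1: "-1 < 2 * t / n - 1" using assms n by (simp add: field_simps)
  have u2: "2 * t / n - 1 < 1" using assms n by (simp add: field_simps)
  have d: "DERIV (\<lambda>t. arcsin (2 * t / n - 1)) t :> inverse (sqrt (1 - (2 * t / n - 1)\<^sup>2)) * (2 / n)"
  proof -
    have dg: "DERIV (\<lambda>t. 2 * t / n - 1) t :> 2 / n" using n by (auto intro!: derivative_eq_intros)
    show ?thesis using DERIV_chain2[OF DERIV_arcsin[OF u1 u2] dg] n by simp
  qed
  have e: "1 - (2 * t / n - 1)\<^sup>2 = (2 / n)\<^sup>2 * (t * (n - t))"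
    using n by (simp add: field_simps power2_eq_square)
  have "sqrt (1 - (2 * t / n - 1)\<^sup>2) = (2 / n) * sqrt (t * (n - t))"
    unfolding e using n by (simp add: real_sqrt_mult)
  then have "inverse (sqrt (1 - (2 * t / n - 1)\<^sup>2)) * (2 / n) = wt n t"
    using n assms by (simp add: wt_def field_simps)
  with d show ?thesis unfolding FF_def[abs_def] by simp
qed

lemma wt_mono:
  assumes "0 < s" "s \<le> t" "t \<le> n / 2"
  shows "wt n t \<le> wt n s"
proof -
  have "s * (n - s) \<le> t * (n - t)"
  proof -
    have "t * (n - t) - s * (n - s) = (t - s) * (n - s - t)" by (simp add: algebra_simps)
    also have "\<dots> \<ge> 0" using assms by (intro mult_nonneg_nonneg) auto
    finally show ?thesis by simp
  qed
  moreover have "s * (n - s) > 0" using assms by (intro mult_pos_pos) auto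
  ultimately show ?thesis unfolding wt_def
    by (intro divide_left_mono) (auto intro!: mult_pos_pos)
qed

lemma FF_step:
  assumes "0 < x" "x \<le> y" "y \<le> n / 2"
  shows "FF n y - FF n x \<le> (y - x) * wt n x"
proof (cases "x = y")
  case True then show ?thesis by simp
next
  case False
  then have xy: "x < y" using assms by simp
  have "\<exists>z. x < z \<and> z < y \<and> FF n y - FF n x = (y - x) * wt n z"
    by (rule MVT2[OF xy]) (rule FF_deriv, use assms in auto)
  then obtain z where z: "x < z" "z < y" "FF n y - FF n x = (y - x) * wt n z" by blast
  have "wt n z \<le> wt n x" using z assms by (intro wt_mono) auto
  then show ?thesis using z xy by (simp add: mult_left_mono)
qed

lemma FF_mono:
  assumes "0 \<le> x" "x \<le> y" "y \<le> n" "n > 0"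
  shows "FF n x \<le> FF n y"
  unfolding FF_def using assms
  by (intro arcsin_le_arcsin) (auto simp: field_simps divide_right_mono)


lemma crt_interval:
  fixes a c n y :: nat
  assumes cop: "coprime a c" and a: "a > 0" and c: "c > 0"
  shows "\<exists>k. y < k \<and> k \<le> y + a * c \<and> a dvd k \<and> k mod c = n mod c"
proof -
  define m where "m = a * c"
  have m: "m > 0" using a c by (simp add: m_def)
  obtain x0 where x0: "[x0 = 0] (mod a)" "[x0 = n] (mod c)"
    using binary_chinese_remainder_nat[OF cop] by blast
  define r where "r = x0 mod m"
  have ar: "a dvd r" using x0(1) unfolding r_def m_def
    by (auto simp: cong_0_iff intro!: dvd_mod)
  have cr: "r mod c = n mod c" using x0(2) unfolding r_def m_def cong_def
    by (metis mod_mod_cancel dvd_triv_right)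
  have rm: "r < m" using m by (simp add: r_def)
  show ?thesis
  proof (cases "r \<le> y")
    case False
    then show ?thesis using ar cr rm by (intro exI[of _ r]) (auto simp: m_def)
  next
    case True
    define t where "t = (y - r) div m + 1"
    define k where "k = r + m * t"
    have h1: "m * ((y - r) div m) \<le> y - r" by (simp add: mult.commute)
    have h2: "y - r < m * ((y - r) div m) + m"
      using m by (metis add.commute div_mult_mod_eq mod_less_divisor mult.commute nat_add_left_cancel_less)
    have "y < k" unfolding k_def t_def using h2 True by (simp add: algebra_simps)
    moreover have "k \<le> y + a * c" unfolding k_def t_def using h1 True by (simp add: algebra_simps m_def)
    moreover have "a dvd k" unfolding k_def m_def using ar by simp
    moreover have "k mod c = n mod c" unfolding k_def m_def using cr
      by (metis mod_mult_self2 mult.commute mult.left_commute)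
    ultimately show ?thesis by blast
  qed
qed


lemma wt_nonneg: "0 \<le> t \<Longrightarrow> t \<le> n \<Longrightarrow> 0 \<le> wt n t"
  unfolding wt_def by simp

lemma ap_bound:
  fixes n A a c h :: nat
  assumes cop: "coprime a c" and a: "0 < a" "a \<le> A" and c: "0 < c" "c \<le> A"
    and h: "h = (n - 1) div 2" and hA: "2 * A^2 \<le> h"
  shows "(FF n (real h - real (A^2)) - FF n (real (2 * A^2))) / real (a * c)
       \<le> (\<Sum>k \<in> {k \<in> {A^2<..h}. a dvd k \<and> c dvd (n - k)}. wt n k)"
proof -
  define m where "m = a * c"
  have m0: "0 < m" using a c by (simp add: m_def)
  have mA: "m \<le> A^2" unfolding m_def power2_eq_square using a c by (intro mult_mono) auto
  define q where "q = (h - A^2) div m"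
  have mh: "m \<le> h - A^2" using mA hA by simp
  have q1: "1 \<le> q" unfolding q_def using m0 mh by (simp add: Suc_le_eq div_greater_zero_iff)
  have mq1: "m * q \<le> h - A^2" unfolding q_def by (simp add: mult.commute)
  have mq2: "h - A^2 < m * q + m" unfolding q_def using m0
    by (metis add.commute div_mult_mod_eq mod_less_divisor mult.commute nat_add_left_cancel_less)
  define y where "y j = A^2 + j * m" for j
  have A0: "0 < A^2" using a by simp
  have hpos: "0 < h" using hA A0 by linarith
  have n_ge: "2 * h < n" using h hpos by (cases n) auto
  have hn: "real h \<le> real n / 2" using n_ge by simp
  have "\<forall>j. \<exists>k. y j < k \<and> k \<le> y j + a * c \<and> a dvd k \<and> k mod c = n mod c"
    using crt_interval[OF cop a(1) c(1)] by blast
  then obtain kk where kk0: "\<forall>j. y j < kk j \<and> kk j \<le> y j + a * c \<and> a dvd kk j \<and> kk j mod c = n mod c"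
    by metis
  have ySuc: "y (Suc j) = y j + a * c" for j unfolding y_def m_def by simp
  have kk: "\<And>j. y j < kk j" "\<And>j. kk j \<le> y (Suc j)" "\<And>j. a dvd kk j"
      "\<And>j. kk j mod c = n mod c"
    using kk0 ySuc by auto
  have yq: "y q \<le> h" using mq1 hA unfolding y_def by (simp add: mult.commute)
  have ymono: "i \<le> j \<Longrightarrow> y i \<le> y j" for i j unfolding y_def by simp
  let ?S = "{k \<in> {A^2<..h}. a dvd k \<and> c dvd (n - k)}"
  have kkS: "kk j \<in> ?S" if "j < q - 1" for j
  proof -
    have "Suc j \<le> q" using that by linarith
    then have "kk j \<le> y q" using kk(2)[of j] ymono[of "Suc j" q] by linarith
    then have kh: "kk j \<le> h" using yq by simp
    have "A^2 < kk j" using kk(1)[of j] unfolding y_def by simp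
    moreover have "c dvd (n - kk j)"
      using kk(4)[of j] kh n_ge by (subst mod_eq_dvd_iff_nat[symmetric]) auto
    ultimately show ?thesis using kh kk(3) by auto
  qed
  have inj: "inj_on kk {..<q-1}"
  proof (rule inj_onI)
    fix i j assume "i \<in> {..<q-1}" "j \<in> {..<q-1}" "kk i = kk j"
    show "i = j"
    proof (rule ccontr)
      assume "i \<noteq> j"
      then consider "i < j" | "j < i" by linarith
      then show False
      proof cases
        case 1 then have "kk i < kk j" using kk(2)[of i] kk(1)[of j] ymono[of "Suc i" j] by simp
        then show False using \<open>kk i = kk j\<close> by simp
      next
        case 2 then have "kk j < kk i" using kk(2)[of j] kk(1)[of i] ymono[of "Suc j" i] by simp
        then show False using \<open>kk i = kk j\<close> by simp
      qed
    qed
  qed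
  define G where "G j = FF n (real (y (Suc j)))" for j
  have step: "(G (Suc j) - G j) / real m \<le> wt n (kk j)" if "j < q - 1" for j
  proof -
    have "Suc (Suc j) \<le> q" using that by linarith
    then have y2: "y (Suc (Suc j)) \<le> h" using ymono[of "Suc (Suc j)" q] yq by linarith
    have ypos: "0 < y (Suc j)" unfolding y_def using m0 by simp
    have "G (Suc j) - G j \<le> (real (y (Suc (Suc j))) - real (y (Suc j))) * wt n (y (Suc j))"
      unfolding G_def using y2 hn ypos ymono[of "Suc j" "Suc (Suc j)"]
      by (intro FF_step) auto
    also have "real (y (Suc (Suc j))) - real (y (Suc j)) = real m" unfolding y_def by simp
    finally have "(G (Suc j) - G j) / real m \<le> wt n (y (Suc j))" using m0 by (simp add: field_simps)
    also have "wt n (y (Suc j)) \<le> wt n (kk j)"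
      using kk(1)[of j] kk(2)[of j] y2 hn ymono[of "Suc j" "Suc (Suc j)"]
      by (intro wt_mono) auto
    finally show ?thesis .
  qed
  have "(\<Sum>j<q-1. (G (Suc j) - G j) / real m) = (G (q - 1) - G 0) / real m"
    by (simp add: sum_divide_distrib[symmetric] sum_lessThan_telescope)
  also have "G (q - 1) = FF n (real (y q))" using q1 by (simp add: G_def)
  also have "G 0 = FF n (real (A^2 + m))" by (simp add: G_def y_def)
  finally have tel: "(\<Sum>j<q-1. (G (Suc j) - G j) / real m) = (FF n (real (y q)) - FF n (real (A^2 + m))) / real m" .
  have f1: "FF n (real h - real (A^2)) \<le> FF n (real (y q))"
  proof (rule FF_mono)
    show "0 \<le> real h - real (A^2)" using hA by simp
    have nat1: "h - A^2 \<le> A^2 + q * m" using mq2 mA by (simp add: mult.commute)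
    have "real (h - A^2) \<le> real (A^2 + q * m)" using nat1 by (simp only: of_nat_le_iff)
    moreover have "real (h - A^2) = real h - real (A^2)" using hA by (simp add: of_nat_diff)
    ultimately show "real h - real (A^2) \<le> real (y q)" unfolding y_def by linarith
    show "real (y q) \<le> real n" using yq n_ge by simp
    show "0 < real n" using n_ge by simp
  qed
  have f2: "FF n (real (A^2 + m)) \<le> FF n (real (2 * A^2))"
  proof (rule FF_mono)
    have "2 * A^2 \<le> n" using hA n_ge by linarith
    then show "real (2 * A^2) \<le> real n" by (simp only: of_nat_le_iff)
    have "A^2 + m \<le> 2 * A^2" using mA by linarith
    then show "real (A^2 + m) \<le> real (2 * A^2)" by (simp only: of_nat_le_iff)
  qed (use n_ge in auto)
  have "(FF n (real h - real (A^2)) - FF n (real (2 * A^2))) / real (a * c)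
        \<le> (FF n (real (y q)) - FF n (real (A^2 + m))) / real m"
    unfolding m_def[symmetric] using f1 f2 m0 by (intro divide_right_mono) auto
  also have "\<dots> = (\<Sum>j<q-1. (G (Suc j) - G j) / real m)" using tel by simp
  also have "\<dots> \<le> (\<Sum>j<q-1. wt n (kk j))" using step by (intro sum_mono) auto
  also have "\<dots> = (\<Sum>k \<in> kk ` {..<q-1}. wt n k)" using inj by (simp add: sum.reindex)
  also have "\<dots> \<le> (\<Sum>k \<in> ?S. wt n k)"
  proof (rule sum_mono2)
    show "finite ?S" by simp
    show "kk ` {..<q-1} \<subseteq> ?S" using kkS by auto
    show "0 \<le> wt n k" if "k \<in> ?S - kk ` {..<q-1}" for k
      using that n_ge by (intro wt_nonneg) auto
  qed
  finally show ?thesis .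
qed


lemma tau_ge:
  fixes k A :: nat
  assumes "A^2 < k"
  shows "2 * card {a \<in> {1..A}. a dvd k} \<le> divisor_count k"
proof -
  define S where "S = {a \<in> {1..A}. a dvd k}"
  define D where "D = {d. d dvd k \<and> d > 0}"
  have k0: "k > 0" using assms by simp
  have finD: "finite D" unfolding D_def using k0 by (auto intro: finite_subset[of _ "{..k}"] dest: dvd_imp_le)
  have SD: "S \<subseteq> D" unfolding S_def D_def by auto
  have ID: "(\<lambda>a. k div a) ` S \<subseteq> D" unfolding S_def D_def using k0
    by (auto simp: div_greater_zero_iff dvd_imp_le intro: dvd_div_eq_mult) 
  have big: "A < k div a" if "a \<in> S" for a
  proof -
    have a: "1 \<le> a" "a \<le> A" "a dvd k" using that by (auto simp: S_def)
    have "a * A < a * (k div a)"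
    proof -
      have "a * A \<le> A * A" using a by simp
      also have "\<dots> < k" using assms by (simp add: power2_eq_square)
      also have "k = a * (k div a)" using a by simp
      finally show ?thesis .
    qed
    then show ?thesis by simp
  qed
  have disj: "S \<inter> (\<lambda>a. k div a) ` S = {}" using big by (force simp: S_def)
  have inj: "inj_on (\<lambda>a. k div a) S"
  proof (rule inj_onI)
    fix a b assume ab: "a \<in> S" "b \<in> S" "k div a = k div b"
    then have "a dvd k" "b dvd k" "a > 0" "b > 0" by (auto simp: S_def)
    then show "a = b" using ab(3) k0
      by (metis div_mult_self1_is_m dvd_div_mult_self nonzero_mult_div_cancel_left div_greater_zero_iff dvd_imp_le mult.commute)
  qed
  have finS: "finite S" by (simp add: S_def)
  have "2 * card S = card (S \<union> (\<lambda>a. k div a) ` S)"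
    using disj inj finS by (simp add: card_Un_disjoint card_image)
  also have "\<dots> \<le> card D" using SD ID finD by (intro card_mono) auto
  finally show ?thesis by (simp add: S_def D_def divisor_count_def)
qed


definition tm :: "nat \<Rightarrow> nat \<Rightarrow> real" where
  "tm n k = real (divisor_count k) * real (divisor_count (n - k)) / (sqrt (real (n - k)) * sqrt (real k))"

lemma T_tm: "T n = (\<Sum>k\<in>{0<..<n}. tm n k)"
  unfolding T_def tm_def by simp

lemma tm_nonneg: "0 \<le> tm n k" unfolding tm_def by simp

lemma T_sym: "2 * (\<Sum>k\<in>{1..(n-1) div 2}. tm n k) \<le> T n"
proof -
  define h where "h = (n - 1) div 2"
  have hn: "2 * h < n" if "h > 0" using that by (cases n) (auto simp: h_def)
  let ?I = "(\<lambda>k. n - k) ` {1..h}"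
  have inj: "inj_on (\<lambda>k. n - k) {1..h}"
    by (rule inj_onI) (use hn in force)
  have disj: "{1..h} \<inter> ?I = {}" using hn by force
  have sub: "{1..h} \<union> ?I \<subseteq> {0<..<n}" using hn by force
  have "(\<Sum>k\<in>?I. tm n k) = (\<Sum>k\<in>{1..h}. tm n (n - k))" using inj by (simp add: sum.reindex)
  also have "\<dots> = (\<Sum>k\<in>{1..h}. tm n k)"
  proof (rule sum.cong)
    fix k assume "k \<in> {1..h}"
    then have "n - (n - k) = k" using hn by force
    then show "tm n (n - k) = tm n k" unfolding tm_def by (simp add: mult.commute)
  qed simp
  finally have e: "(\<Sum>k\<in>?I. tm n k) = (\<Sum>k\<in>{1..h}. tm n k)" .
  have "2 * (\<Sum>k\<in>{1..h}. tm n k) = (\<Sum>k\<in>{1..h} \<union> ?I. tm n k)"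
    using disj e by (subst sum.union_disjoint) auto
  also have "\<dots> \<le> (\<Sum>k\<in>{0<..<n}. tm n k)"
    using sub by (intro sum_mono2) (auto simp: tm_nonneg)
  finally show ?thesis unfolding T_tm h_def .
qed


definition Qs :: "nat \<Rightarrow> (nat \<times> nat) set" where
  "Qs N = {p \<in> {1..N} \<times> {1..N}. coprime (fst p) (snd p)}"

definition Cop :: "nat \<Rightarrow> real" where
  "Cop N = (\<Sum>p\<in>Qs N. 1 / (real (fst p) * real (snd p)))"

lemma tm_wt:
  assumes "k \<le> n"
  shows "tm n k = real (divisor_count k) * real (divisor_count (n - k)) * wt n k"
proof -
  have "sqrt (real (n - k)) * sqrt (real k) = sqrt (real k * (real n - real k))"
    using assms by (simp add: real_sqrt_mult of_nat_diff mult.commute)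
  then show ?thesis unfolding tm_def wt_def by simp
qed

lemma T_lower:
  fixes n A :: nat
  assumes A: "1 \<le> A" and hA: "2 * A^2 \<le> (n - 1) div 2"
  shows "8 * (FF n (real ((n - 1) div 2) - real (A^2)) - FF n (real (2 * A^2))) * Cop A \<le> T n"
proof -
  define h where "h = (n - 1) div 2"
  define \<Delta> where "\<Delta> = FF n (real h - real (A^2)) - FF n (real (2 * A^2))"
  define P where "P = {1..A} \<times> {1..A}"
  define K where "K = {A^2<..h}"
  define cnd where "cnd p k = (fst p dvd k \<and> snd p dvd (n - k))" for p k
  have hA': "2 * A^2 \<le> h" using hA by (simp add: h_def)
  have A0: "0 < A^2" using A by simp
  have hpos: "0 < h" using hA' A0 by linarith
  have n_ge: "2 * h < n" using hpos by (cases n) (auto simp: h_def)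
  have finP: "finite P" by (simp add: P_def)
  have finK: "finite K" by (simp add: K_def)
  have "\<Delta> * Cop A = (\<Sum>p\<in>Qs A. \<Delta> / real (fst p * snd p))"
    unfolding Cop_def by (simp add: sum_distrib_left)
  also have "\<dots> \<le> (\<Sum>p\<in>Qs A. \<Sum>k\<in>{k\<in>K. cnd p k}. wt n k)"
  proof (rule sum_mono)
    fix p assume p: "p \<in> Qs A"
    obtain a c where pac: "p = (a, c)" by (cases p)
    have "coprime a c" "0 < a" "a \<le> A" "0 < c" "c \<le> A" using p by (auto simp: Qs_def pac)
    from ap_bound[OF this h_def hA']
    show "\<Delta> / real (fst p * snd p) \<le> (\<Sum>k\<in>{k\<in>K. cnd p k}. wt n k)"
      by (simp add: pac \<Delta>_def K_def cnd_def)
  qed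
  also have "\<dots> \<le> (\<Sum>p\<in>P. \<Sum>k\<in>{k\<in>K. cnd p k}. wt n k)"
  proof (rule sum_mono2[OF finP])
    show "Qs A \<subseteq> P" by (auto simp: Qs_def P_def)
    show "0 \<le> (\<Sum>k\<in>{k\<in>K. cnd p k}. wt n k)" for p
      using n_ge by (intro sum_nonneg wt_nonneg) (auto simp: K_def)
  qed
  also have "\<dots> = (\<Sum>p\<in>P. \<Sum>k\<in>K. if cnd p k then wt n k else 0)"
    using finK by (simp add: sum.inter_filter)
  also have "\<dots> = (\<Sum>k\<in>K. \<Sum>p\<in>P. if cnd p k then wt n k else 0)"
    by (rule sum.swap)
  also have "\<dots> = (\<Sum>k\<in>K. real (card {p\<in>P. cnd p k}) * wt n k)"
    using finP by (simp add: sum.inter_filter[symmetric])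
  also have "\<dots> \<le> (\<Sum>k\<in>K. tm n k / 4)"
  proof (rule sum_mono)
    fix k assume k: "k \<in> K"
    define Sa where "Sa = {a \<in> {1..A}. a dvd k}"
    define Sc where "Sc = {c \<in> {1..A}. c dvd (n - k)}"
    have "{p\<in>P. cnd p k} = Sa \<times> Sc" by (auto simp: P_def Sa_def Sc_def cnd_def)
    then have cd: "card {p\<in>P. cnd p k} = card Sa * card Sc" by (simp add: card_cartesian_product)
    have k1: "A^2 < k" "k \<le> h" using k by (auto simp: K_def)
    have k2: "A^2 < n - k" using k1 n_ge by linarith
    have t1: "2 * card Sa \<le> divisor_count k" unfolding Sa_def by (rule tau_ge[OF k1(1)])
    have t2: "2 * card Sc \<le> divisor_count (n - k)" unfolding Sc_def by (rule tau_ge[OF k2])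
    have "4 * (card Sa * card Sc) \<le> divisor_count k * divisor_count (n - k)"
      using mult_le_mono[OF t1 t2] by simp
    then have r: "4 * (real (card Sa) * real (card Sc)) \<le> real (divisor_count k) * real (divisor_count (n - k))"
      by (metis of_nat_le_iff of_nat_mult of_nat_numeral)
    have w: "0 \<le> wt n k" using k1 n_ge by (intro wt_nonneg) auto
    have "real (card {p\<in>P. cnd p k}) * wt n k = real (card Sa) * real (card Sc) * wt n k"
      using cd by simp
    also have "\<dots> \<le> real (divisor_count k) * real (divisor_count (n - k)) * wt n k / 4"
      using mult_right_mono[OF r w] by simp
    also have "\<dots> = tm n k / 4" using k1 n_ge by (subst tm_wt) auto
    finally show "real (card {p\<in>P. cnd p k}) * wt n k \<le> tm n k / 4" .
  qed
  also have "\<dots> = (\<Sum>k\<in>K. tm n k) / 4" by (simp add: sum_divide_distrib)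
  also have "(\<Sum>k\<in>K. tm n k) \<le> (\<Sum>k\<in>{1..h}. tm n k)"
    by (intro sum_mono2) (auto simp: K_def tm_nonneg)
  finally have "\<Delta> * Cop A \<le> (\<Sum>k\<in>{1..h}. tm n k) / 4" by simp
  then have "8 * (\<Delta> * Cop A) \<le> 2 * (\<Sum>k\<in>{1..h}. tm n k)" by simp
  also have "\<dots> \<le> T n" using T_sym[of n] by (simp add: h_def)
  finally have "8 * (\<Delta> * Cop A) \<le> T n" .
  then show ?thesis unfolding \<Delta>_def h_def by (metis mult.assoc)
qed


lemma harm_sq_pairs:
  "(harm N :: real)^2 = (\<Sum>p\<in>{1..N} \<times> {1..N}. 1 / (real (fst p) * real (snd p)))"
proof -
  have "(harm N :: real)^2 = (\<Sum>a=1..N. inverse (real a)) * (\<Sum>c=1..N. inverse (real c))"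
    by (simp add: harm_def power2_eq_square)
  also have "\<dots> = (\<Sum>a=1..N. \<Sum>c=1..N. inverse (real a) * inverse (real c))"
    by (simp add: sum_product)
  also have "\<dots> = (\<Sum>p\<in>{1..N} \<times> {1..N}. 1 / (real (fst p) * real (snd p)))"
    by (simp add: sum.cartesian_product field_simps case_prod_beta)
  finally show ?thesis .
qed

definition scl :: "nat \<Rightarrow> nat \<times> nat \<Rightarrow> nat \<times> nat" where
  "scl g p = (g * fst p, g * snd p)"

lemma pairs_decomp:
  "{1..N} \<times> {1..N} = (\<Union>g\<in>{1..N}. scl g ` Qs (N div g))"
proof (intro equalityI subsetI)
  fix p assume p: "p \<in> {1..N} \<times> {1..N}"
  obtain a c where pac: "p = (a, c)" by (cases p)
  have ac: "1 \<le> a" "a \<le> N" "1 \<le> c" "c \<le> N" using p pac by auto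
  define g where "g = gcd a c"
  have g0: "0 < g" using ac by (simp add: g_def)
  define a' where "a' = a div g"
  define c' where "c' = c div g"
  have a': "a = g * a'" "c = g * c'" "coprime a' c'"
    using ac div_gcd_coprime[of a c] unfolding a'_def c'_def g_def by auto
  have gN: "g \<le> N" using ac gcd_le1_nat[of a c] unfolding g_def by linarith
  have "a' * g \<le> N" "c' * g \<le> N" using ac a' by (simp_all add: mult.commute)
  then have "a' \<le> N div g" "c' \<le> N div g" using g0 by (simp_all add: less_eq_div_iff_mult_less_eq)
  moreover have "1 \<le> a'" "1 \<le> c'" using ac a' by (auto intro: Nat.gr0I)
  ultimately have "(a', c') \<in> Qs (N div g)" using a' by (simp add: Qs_def)
  moreover have "p = scl g (a', c')" using a' pac by (simp add: scl_def)
  ultimately show "p \<in> (\<Union>g\<in>{1..N}. scl g ` Qs (N div g))" using g0 gN by force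
next
  fix p assume "p \<in> (\<Union>g\<in>{1..N}. scl g ` Qs (N div g))"
  then obtain g a c where g: "1 \<le> g" "g \<le> N" and ac: "(a, c) \<in> Qs (N div g)" and p: "p = scl g (a, c)"
    by auto
  have "1 \<le> a" "a \<le> N div g" "1 \<le> c" "c \<le> N div g" using ac by (auto simp: Qs_def)
  moreover have "g * (N div g) \<le> N" by simp
  ultimately have "g * a \<le> N" "g * c \<le> N" "1 \<le> g * a" "1 \<le> g * c" using g
    by (auto intro: le_trans[OF mult_le_mono2])
  then show "p \<in> {1..N} \<times> {1..N}" using p by (simp add: scl_def)
qed

lemma scl_gcd: "p \<in> Qs M \<Longrightarrow> gcd (fst (scl g p)) (snd (scl g p)) = g"
  by (cases p) (simp add: Qs_def scl_def gcd_mult_left)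

lemma harm_sq_identity:
  "(harm N :: real)^2 = (\<Sum>g\<in>{1..N}. Cop (N div g) / (real g)^2)"
proof -
  have disj: "\<forall>i\<in>{1..N}. \<forall>j\<in>{1..N}. i \<noteq> j \<longrightarrow> scl i ` Qs (N div i) \<inter> scl j ` Qs (N div j) = {}"
  proof (intro ballI impI)
    fix i j assume ij: "i \<in> {1..N}" "j \<in> {1..N}" "i \<noteq> j"
    show "scl i ` Qs (N div i) \<inter> scl j ` Qs (N div j) = {}"
    proof (rule ccontr)
      assume "scl i ` Qs (N div i) \<inter> scl j ` Qs (N div j) \<noteq> {}"
      then obtain p q where pq: "p \<in> Qs (N div i)" "q \<in> Qs (N div j)" "scl i p = scl j q" by blast
      have "i = gcd (fst (scl i p)) (snd (scl i p))" using scl_gcd[OF pq(1)] by simp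
      also have "\<dots> = j" using scl_gcd[OF pq(2)] pq(3) by simp
      finally show False using ij by simp
    qed
  qed
  have fin: "\<forall>i\<in>{1..N}. finite (scl i ` Qs (N div i))" by (simp add: Qs_def)
  have "(harm N :: real)^2 = (\<Sum>p\<in>(\<Union>g\<in>{1..N}. scl g ` Qs (N div g)). 1 / (real (fst p) * real (snd p)))"
    by (simp only: harm_sq_pairs pairs_decomp)
  also have "\<dots> = (\<Sum>g\<in>{1..N}. \<Sum>p\<in>scl g ` Qs (N div g). 1 / (real (fst p) * real (snd p)))"
    using disj fin by (subst sum.UNION_disjoint) auto
  also have "\<dots> = (\<Sum>g\<in>{1..N}. Cop (N div g) / (real g)^2)"
  proof (rule sum.cong)
    fix g assume g: "g \<in> {1..N}"
    have inj: "inj_on (scl g) (Qs (N div g))"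
      using g by (auto simp: inj_on_def scl_def)
    have "(\<Sum>p\<in>scl g ` Qs (N div g). 1 / (real (fst p) * real (snd p)))
        = (\<Sum>p\<in>Qs (N div g). 1 / (real (fst (scl g p)) * real (snd (scl g p))))"
      using inj by (simp add: sum.reindex)
    also have "\<dots> = (\<Sum>p\<in>Qs (N div g). (1 / (real (fst p) * real (snd p))) / (real g)^2)"
      by (intro sum.cong) (auto simp: scl_def field_simps power2_eq_square)
    also have "\<dots> = Cop (N div g) / (real g)^2" by (simp add: Cop_def sum_divide_distrib)
    finally show "(\<Sum>p\<in>scl g ` Qs (N div g). 1 / (real (fst p) * real (snd p))) = Cop (N div g) / (real g)^2" .
  qed simp
  finally show ?thesis .
qed


lemma harm_le_ln: "1 \<le> N \<Longrightarrow> (harm N :: real) \<le> ln (real N) + 1"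
proof -
  assume N: "1 \<le> N"
  obtain M where M: "N = Suc M" using N by (cases N) auto
  have "harm (Suc M) - ln (real (Suc M)) \<le> harm (Suc 0) - ln (real (Suc 0))"
    using decseq_harm_diff_ln unfolding decseq_def by (metis le0)
  moreover have "harm 0 = (0::real)" by (simp add: harm_def)
  ultimately show ?thesis using M by (simp add: harm_Suc)
qed

lemma ln_le_harm': "ln (real N) \<le> (harm N :: real)"
proof (cases "N = 0")
  case True then show ?thesis by (simp add: harm_def)
next
  case False
  then have "ln (real N) \<le> ln (real N + 1)" by simp
  also have "\<dots> \<le> harm N" by (rule ln_le_harm)
  finally show ?thesis .
qed

lemma Cop_nonneg: "0 \<le> Cop N"
  unfolding Cop_def by (intro sum_nonneg) auto

lemma Cop_le: "Cop N \<le> (harm N)^2"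
  unfolding harm_sq_pairs Cop_def Qs_def
  by (intro sum_mono2) auto

lemma ln_nat_inf: "filterlim (\<lambda>N. ln (real N)) at_top sequentially"
  by (rule filterlim_compose[OF ln_at_top filterlim_real_sequentially])

lemma ev_div:
  assumes "0 < g" "eventually P sequentially"
  shows "eventually (\<lambda>N. P (N div g)) sequentially"
proof -
  obtain M0 where M0: "\<And>M. M \<ge> M0 \<Longrightarrow> P M" using assms(2) unfolding eventually_sequentially by blast
  show ?thesis unfolding eventually_sequentially
  proof (intro exI allI impI)
    fix N assume "M0 * g \<le> N"
    then have "M0 \<le> N div g" using assms(1) by (simp add: less_eq_div_iff_mult_less_eq)
    then show "P (N div g)" by (rule M0)
  qed
qed

lemma ev_ln_large: "eventually (\<lambda>N. c \<le> ln (real N)) sequentially"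
  using ln_nat_inf by (simp add: filterlim_at_top)

lemma ev_ln_div:
  assumes "0 < g" "0 < \<delta>" "\<delta> \<le> 1"
  shows "eventually (\<lambda>N. (1 - \<delta>) * (ln (real N))^2 \<le> (ln (real (N div g)))^2) sequentially"
proof -
  define c where "c = ln (2 * real g)"
  have c0: "0 \<le> c" unfolding c_def using assms by simp
  have ev1: "eventually (\<lambda>N. max 1 (2 * c / \<delta>) \<le> ln (real N)) sequentially" by (rule ev_ln_large)
  have ev2: "eventually (\<lambda>N. g \<le> N) sequentially" by (rule eventually_ge_at_top)
  show ?thesis using ev1 ev2
  proof eventually_elim
    case (elim N)
    define L where "L = ln (real N)"
    have L1: "1 \<le> L" "2 * c / \<delta> \<le> L" using elim by (auto simp: L_def)
    have N0: "0 < N" using elim assms by linarith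
    have dg: "1 \<le> N div g" using elim assms by (simp add: div_greater_zero_iff Suc_le_eq)
    have "N \<le> 2 * g * (N div g)"
    proof -
      have "N = g * (N div g) + N mod g" by simp
      moreover have "N mod g < g" using assms by simp
      moreover have "g \<le> g * (N div g)" using dg by simp
      ultimately show ?thesis by linarith
    qed
    then have "real N \<le> 2 * real g * real (N div g)" by (metis of_nat_le_iff of_nat_mult of_nat_numeral)
    then have "ln (real N) \<le> ln (2 * real g * real (N div g))" using N0 by simp
    also have "\<dots> = c + ln (real (N div g))" using assms dg by (simp add: c_def ln_mult)
    finally have l: "L - c \<le> ln (real (N div g))" by (simp add: L_def)
    have Lc: "0 \<le> L - c"
    proof -
      have "2 * c \<le> \<delta> * L" using L1(2) assms(2) by (simp add: field_simps)
      moreover have "\<delta> * L \<le> 1 * L" using assms L1 by (intro mult_right_mono) auto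
      ultimately show ?thesis using c0 L1 by linarith
    qed
    have "(1 - \<delta>) * L^2 \<le> L^2 - 2 * c * L"
    proof -
      have "2 * c \<le> \<delta> * L" using L1(2) assms(2) by (simp add: field_simps)
      then have "2 * c * L \<le> \<delta> * L * L" using L1 by (intro mult_right_mono) auto
      then show ?thesis by (simp add: algebra_simps power2_eq_square)
    qed
    also have "\<dots> \<le> (L - c)^2" by (simp add: power2_eq_square algebra_simps)
    also have "\<dots> \<le> (ln (real (N div g)))^2" using l Lc by (intro power_mono) auto
    finally show ?case by (simp add: L_def)
  qed
qed


definition sq :: "nat \<Rightarrow> real" where
  "sq M = (\<Sum>g\<in>{1..M}. 1 / (real g)^2)"

lemma sq_alt: "sq n = (\<Sum>i<n. 1 / (real i + 1)^2)"
  unfolding sq_def by (induction n) auto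

lemma sq_tends: "sq \<longlonglongrightarrow> pi^2 / 6"
  using inverse_squares_sums unfolding sums_def sq_alt[abs_def] by (simp add: add.commute)

lemma sq_le: "sq M \<le> pi^2 / 6"
proof -
  have s: "summable (\<lambda>i. 1 / (real i + 1)^2)" using inverse_squares_sums by (simp add: sums_iff add.commute)
  have "sq M \<le> (\<Sum>i. 1 / (real i + 1)^2)" unfolding sq_alt
    by (rule sum_le_suminf[OF s]) auto
  also have "\<dots> = pi^2 / 6" using inverse_squares_sums by (simp add: sums_iff add.commute)
  finally show ?thesis .
qed

lemma sq_mono: "M \<le> M' \<Longrightarrow> sq M \<le> sq M'"
  unfolding sq_def by (intro sum_mono2) auto

lemma ev_harm_sq:
  assumes "0 < \<delta>"
  shows "eventually (\<lambda>N. (harm N :: real)^2 \<le> (1 + \<delta>) * (ln (real N))^2) sequentially"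
  using ev_ln_large[of "max 1 (3 / \<delta>)"]
proof eventually_elim
  case (elim N)
  define L where "L = ln (real N)"
  have L: "1 \<le> L" "3 / \<delta> \<le> L" using elim by (auto simp: L_def)
  have N: "1 \<le> N" using L(1) unfolding L_def by (cases N) auto
  have h: "harm N \<le> L + 1" "0 \<le> (harm N :: real)" using harm_le_ln[OF N] harm_nonneg by (auto simp: L_def)
  have "(harm N :: real)^2 \<le> (L + 1)^2" using h by (intro power_mono) auto
  also have "\<dots> \<le> (1 + \<delta>) * L^2"
  proof -
    have "3 \<le> \<delta> * L" using L(2) assms by (simp add: field_simps)
    then have "3 * L \<le> \<delta> * L * L" using L by (intro mult_right_mono) auto
    moreover have "(L + 1)^2 = L*L + 2*L + 1" by (simp add: power2_eq_square algebra_simps)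
    moreover have "(1 + \<delta>) * L^2 = L*L + \<delta>*L*L" by (simp add: power2_eq_square algebra_simps)
    ultimately show ?thesis using L by linarith
  qed
  finally show ?case by (simp add: L_def)
qed


lemma split3:
  fixes f :: "nat \<Rightarrow> real"
  assumes "1 \<le> G" "G \<le> N"
  shows "(\<Sum>g\<in>{1..N}. f g) = f 1 + (\<Sum>g\<in>{2..G}. f g) + (\<Sum>g\<in>{G<..N}. f g)"
proof -
  have e: "{1..N} = {1} \<union> ({2..G} \<union> {G<..N})" using assms by auto
  have d: "sum f ({2..G} \<union> {G<..N}) = sum f {2..G} + sum f {G<..N}"
    by (intro sum.union_disjoint) auto
  have "sum f ({1} \<union> ({2..G} \<union> {G<..N})) = f 1 + sum f ({2..G} \<union> {G<..N})"
    using assms by (subst insert_is_Un[symmetric]) (simp add: sum.insert)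
  then have "(\<Sum>g\<in>{1..N}. f g) = f 1 + ((\<Sum>g\<in>{2..G}. f g) + (\<Sum>g\<in>{G<..N}. f g))"
    using d unfolding e by simp
  then show ?thesis by simp
qed

definition Dd :: "nat \<Rightarrow> real" where "Dd N = Cop N / (ln (real N))^2"

lemma Dd_nonneg: "0 \<le> Dd N" unfolding Dd_def using Cop_nonneg by simp

lemma Cop_Dd: "2 \<le> M \<Longrightarrow> Cop M = Dd M * (ln (real M))^2"
  unfolding Dd_def by simp

lemma ev_const_seq: "eventually (\<lambda>N. P) sequentially \<Longrightarrow> P"
  by (simp add: eventually_const)

lemma pi_sq_bounds: "1 < pi^2 / 6 - 1 + 1" "pi^2 / 6 - 1 < 1"
proof -
  have "3 < pi" by (rule pi_gt3)
  then have "3^2 < pi^2" by (intro power_strict_mono) auto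
  then have "9 < pi^2" by simp
  then show "1 < pi^2 / 6 - 1 + 1" by simp
  have "pi \<le> 3.1415926535899" using pi_approx by simp
  then have "pi < 3.2" by simp
  then have "pi^2 < 3.2^2" by (intro power_strict_mono) auto
  moreover have "(3.2::real)^2 < 12" by (simp add: power2_eq_square)
  ultimately show "pi^2 / 6 - 1 < 1" by simp
qed


definition Lset :: "real set" where "Lset = {x. eventually (\<lambda>N. x \<le> Dd N) sequentially}"
definition Uset :: "real set" where "Uset = {y. eventually (\<lambda>N. Dd N \<le> y) sequentially}"
definition LL :: real where "LL = Sup Lset"
definition UU :: real where "UU = Inf Uset"

lemma zero_Lset: "0 \<in> Lset" unfolding Lset_def using Dd_nonneg by simp

lemma four_Uset: "4 \<in> Uset"
proof -
  have e1: "eventually (\<lambda>N. (harm N :: real)^2 \<le> (1 + 3) * (ln (real N))^2) sequentially"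
    by (rule ev_harm_sq) simp
  have "eventually (\<lambda>N. Dd N \<le> 4) sequentially"
    using e1 ev_ln_large[of 1]
  proof eventually_elim
    case (elim N)
    have l: "0 < (ln (real N))^2" using elim by simp
    have "Cop N \<le> 4 * (ln (real N))^2" using Cop_le[of N] elim by simp
    then show ?case unfolding Dd_def using l by (simp add: divide_le_eq)
  qed
  then show ?thesis by (simp add: Uset_def)
qed

lemma LU_le: "x \<in> Lset \<Longrightarrow> y \<in> Uset \<Longrightarrow> x \<le> y"
proof -
  assume "x \<in> Lset" "y \<in> Uset"
  then have "eventually (\<lambda>N. x \<le> Dd N) sequentially" "eventually (\<lambda>N. Dd N \<le> y) sequentially"
    by (auto simp: Lset_def Uset_def)
  then have "eventually (\<lambda>N. x \<le> y) sequentially" by eventually_elim simp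
  then show "x \<le> y" by (rule ev_const_seq)
qed

lemma bddL: "bdd_above Lset" unfolding bdd_above_def using LU_le four_Uset by blast
lemma bddU: "bdd_below Uset" unfolding bdd_below_def using LU_le zero_Lset by blast

lemma LL_nonneg: "0 \<le> LL" unfolding LL_def by (rule cSup_upper[OF zero_Lset bddL])
lemma UU_nonneg: "0 \<le> UU" unfolding UU_def using four_Uset LU_le[OF zero_Lset]
  by (intro cInf_greatest) auto

lemma LL_upper: "x \<in> Lset \<Longrightarrow> x \<le> LL" unfolding LL_def by (rule cSup_upper[OF _ bddL])
lemma UU_lower: "y \<in> Uset \<Longrightarrow> UU \<le> y" unfolding UU_def by (rule cInf_lower[OF _ bddU])

lemma LL_prop: "x < LL \<Longrightarrow> eventually (\<lambda>N. x \<le> Dd N) sequentially"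
proof -
  assume "x < LL"
  then obtain x' where "x' \<in> Lset" "x < x'" unfolding LL_def using less_cSup_iff[of Lset x] zero_Lset bddL
    by auto
  then show ?thesis unfolding Lset_def by (auto elim: eventually_mono)
qed

lemma UU_prop: "UU < y \<Longrightarrow> eventually (\<lambda>N. Dd N \<le> y) sequentially"
proof -
  assume "UU < y"
  then obtain y' where "y' \<in> Uset" "y' < y" unfolding UU_def using cInf_less_iff[of Uset y] four_Uset bddU
    by auto
  then show ?thesis unfolding Uset_def by (auto elim: eventually_mono)
qed


definition zz :: real where "zz = pi^2 / 6 - 1"

lemma zz_bounds: "0 < zz" "zz < 1" using pi_sq_bounds by (auto simp: zz_def)

lemma sq_one: "sq 1 = 1" by (simp add: sq_def)

lemma sq_split: "1 \<le> G \<Longrightarrow> G \<le> N \<Longrightarrow> sq N = 1 + (\<Sum>g\<in>{2..G}. 1 / (real g)^2) + (\<Sum>g\<in>{G<..N}. 1 / (real g)^2)"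
  unfolding sq_def by (subst split3[of G N]) auto

lemma sq_S2: "1 \<le> G \<Longrightarrow> (\<Sum>g\<in>{2..G}. 1 / (real g)^2) = sq G - 1"
  using sq_split[of G G] by simp

lemma sq_tail: "1 \<le> G \<Longrightarrow> G \<le> N \<Longrightarrow> (\<Sum>g\<in>{G<..N}. 1 / (real g)^2) = sq N - sq G"
  using sq_split[of G N] sq_S2[of G] by simp

lemma obtain_G:
  assumes "0 < \<delta>"
  obtains G where "2 \<le> G" "pi^2 / 6 - \<delta> \<le> sq G"
proof -
  have "eventually (\<lambda>G. pi^2 / 6 - \<delta> < sq G) sequentially"
    using sq_tends assms by (intro order_tendstoD(1)) auto
  then obtain M where M: "\<And>G. G \<ge> M \<Longrightarrow> pi^2 / 6 - \<delta> < sq G" unfolding eventually_sequentially by blast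
  show ?thesis using M[of "max M 2"] that[of "max M 2"] by auto
qed

lemma harm_identity_split:
  assumes "1 \<le> G" "G \<le> N"
  shows "(harm N :: real)^2 = Cop N + (\<Sum>g\<in>{2..G}. Cop (N div g) / (real g)^2)
            + (\<Sum>g\<in>{G<..N}. Cop (N div g) / (real g)^2)"
  unfolding harm_sq_identity using split3[OF assms, of "\<lambda>g. Cop (N div g) / (real g)^2"] by simp

lemma lemmaA:
  assumes d: "0 < \<delta>" "\<delta> < 1"
  shows "1 - \<delta> - (UU + \<delta>) * zz \<le> LL"
proof -
  obtain G where G: "2 \<le> G" "pi^2 / 6 - \<delta> \<le> sq G" using obtain_G[OF d(1)] by blast
  have UUd: "0 \<le> UU + \<delta>" using UU_nonneg d by simp
  have e1: "eventually (\<lambda>M. Dd M \<le> UU + \<delta>) sequentially" using UU_prop d by simp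
  have evM: "eventually (\<lambda>M. Cop M \<le> (UU + \<delta>) * (ln (real M))^2) sequentially"
    using e1 eventually_ge_at_top[of 2]
  proof eventually_elim
    case (elim M)
    then have "Cop M = Dd M * (ln (real M))^2" by (simp add: Cop_Dd)
    also have "\<dots> \<le> (UU + \<delta>) * (ln (real M))^2" using elim by (intro mult_right_mono) auto
    finally show ?case .
  qed
  have evg: "\<forall>g\<in>{2..G}. eventually (\<lambda>N. Cop (N div g) \<le> (UU + \<delta>) * (ln (real (N div g)))^2) sequentially"
    using evM by (auto intro: ev_div)
  have "eventually (\<lambda>N. \<forall>g\<in>{2..G}. Cop (N div g) \<le> (UU + \<delta>) * (ln (real (N div g)))^2) sequentially"
    using evg by (intro eventually_ball_finite) auto
  then have "eventually (\<lambda>N. 1 - \<delta> - (UU + \<delta>) * zz \<le> Dd N) sequentially"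
    using eventually_ge_at_top[of G] ev_ln_large[of 1]
  proof eventually_elim
    case (elim N)
    define Lg where "Lg = ln (real N)"
    define H where "H = (harm N :: real)^2"
    have Lg1: "1 \<le> Lg" using elim by (simp add: Lg_def)
    have N0: "0 < N" using Lg1 unfolding Lg_def by (cases N) auto
    have GN: "G \<le> N" using elim by simp
    have HL: "Lg^2 \<le> H" unfolding H_def Lg_def using Lg1 ln_le_harm'[of N]
      by (intro power_mono) (auto simp: Lg_def)
    have s2: "(\<Sum>g\<in>{2..G}. Cop (N div g) / (real g)^2) \<le> (\<Sum>g\<in>{2..G}. (UU + \<delta>) * Lg^2 * (1 / (real g)^2))"
    proof (rule sum_mono)
      fix g assume g: "g \<in> {2..G}"
      have dg: "1 \<le> N div g" using g GN by (simp add: Suc_le_eq div_greater_zero_iff)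
      have "ln (real (N div g)) \<le> Lg" unfolding Lg_def using dg N0 by (simp add: div_le_dividend)
      moreover have "0 \<le> ln (real (N div g))" using dg by simp
      ultimately have "(ln (real (N div g)))^2 \<le> Lg^2" by (intro power_mono)
      then have "Cop (N div g) \<le> (UU + \<delta>) * Lg^2"
        using elim(1) g UUd by (meson mult_left_mono order_trans)
      then show "Cop (N div g) / (real g)^2 \<le> (UU + \<delta>) * Lg^2 * (1 / (real g)^2)"
        using g by (simp add: divide_right_mono)
    qed
    also have "\<dots> = (UU + \<delta>) * Lg^2 * (\<Sum>g\<in>{2..G}. 1 / (real g)^2)"
      by (rule sum_distrib_left[symmetric])
    also have "\<dots> = (UU + \<delta>) * Lg^2 * (sq G - 1)"
      using G by (simp only: sq_S2)
    also have "\<dots> \<le> (UU + \<delta>) * Lg^2 * zz"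
      using sq_le[of G] UUd by (intro mult_left_mono) (auto simp: zz_def)
    finally have s2': "(\<Sum>g\<in>{2..G}. Cop (N div g) / (real g)^2) \<le> (UU + \<delta>) * zz * Lg^2"
      by (simp add: mult_ac)
    have s3: "(\<Sum>g\<in>{G<..N}. Cop (N div g) / (real g)^2) \<le> (\<Sum>g\<in>{G<..N}. H * (1 / (real g)^2))"
    proof (rule sum_mono)
      fix g assume g: "g \<in> {G<..N}"
      have "Cop (N div g) \<le> (harm (N div g))^2" by (rule Cop_le)
      also have "\<dots> \<le> H" unfolding H_def
        by (intro power_mono harm_mono harm_nonneg div_le_dividend)
      finally show "Cop (N div g) / (real g)^2 \<le> H * (1 / (real g)^2)" by (simp add: divide_right_mono)
    qed
    also have "\<dots> = H * (\<Sum>g\<in>{G<..N}. 1 / (real g)^2)"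
      by (rule sum_distrib_left[symmetric])
    also have "\<dots> = H * (sq N - sq G)"
      using G GN by (simp only: sq_tail)
    also have "\<dots> \<le> H * \<delta>"
      using sq_le[of N] G unfolding H_def by (intro mult_left_mono) auto
    finally have s3': "(\<Sum>g\<in>{G<..N}. Cop (N div g) / (real g)^2) \<le> H * \<delta>" .
    have "H = Cop N + (\<Sum>g\<in>{2..G}. Cop (N div g) / (real g)^2) + (\<Sum>g\<in>{G<..N}. Cop (N div g) / (real g)^2)"
      unfolding H_def using G GN by (intro harm_identity_split) auto
    then have "H * (1 - \<delta>) - (UU + \<delta>) * zz * Lg^2 \<le> Cop N" using s2' s3' by (simp add: algebra_simps)
    moreover have "Lg^2 * (1 - \<delta>) \<le> H * (1 - \<delta>)" using HL d by (intro mult_right_mono) auto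
    ultimately have "(1 - \<delta> - (UU + \<delta>) * zz) * Lg^2 \<le> Cop N" by (simp add: algebra_simps)
    moreover have "0 < Lg^2" using Lg1 by simp
    ultimately show ?case unfolding Dd_def Lg_def[symmetric] by (simp add: pos_le_divide_eq)
  qed
  then show ?thesis by (intro LL_upper) (simp add: Lset_def)
qed


lemma lemmaB:
  assumes d: "0 < \<delta>" "\<delta> < 1" "\<delta> \<le> zz"
  shows "UU \<le> 1 + \<delta> - (LL - \<delta>) * (1 - \<delta>) * (zz - \<delta>)"
proof -
  obtain G where G: "2 \<le> G" "pi^2 / 6 - \<delta> \<le> sq G" using obtain_G[OF d(1)] by blast
  obtain x where x: "x \<in> Lset" "LL - \<delta> < x"
    using less_cSup_iff[of Lset "LL - \<delta>"] zero_Lset bddL d(1) unfolding LL_def by auto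
  define xp where "xp = max x 0"
  have xp: "0 \<le> xp" "LL - \<delta> \<le> xp" using x by (auto simp: xp_def)
  have evM: "eventually (\<lambda>M. xp * (ln (real M))^2 \<le> Cop M) sequentially"
    using x(1)[unfolded Lset_def, simplified] eventually_ge_at_top[of 2]
  proof eventually_elim
    case (elim M)
    then have c: "Cop M = Dd M * (ln (real M))^2" by (simp add: Cop_Dd)
    have "x * (ln (real M))^2 \<le> Cop M" unfolding c using elim by (intro mult_right_mono) auto
    moreover have "0 * (ln (real M))^2 \<le> Cop M" using Cop_nonneg by simp
    ultimately show ?case unfolding xp_def by (cases "x \<le> 0") (auto simp: max_def)
  qed
  have evg: "\<forall>g\<in>{2..G}. eventually (\<lambda>N. xp * (ln (real (N div g)))^2 \<le> Cop (N div g)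
                 \<and> (1 - \<delta>) * (ln (real N))^2 \<le> (ln (real (N div g)))^2) sequentially"
  proof
    fix g assume g: "g \<in> {2..G}"
    then have g0: "0 < g" by simp
    show "eventually (\<lambda>N. xp * (ln (real (N div g)))^2 \<le> Cop (N div g)
                 \<and> (1 - \<delta>) * (ln (real N))^2 \<le> (ln (real (N div g)))^2) sequentially"
      using ev_div[OF g0 evM] ev_ln_div[OF g0 d(1)] d(2) by (auto intro: eventually_conj)
  qed
  have evh: "eventually (\<lambda>N. (harm N :: real)^2 \<le> (1 + \<delta>) * (ln (real N))^2) sequentially"
    using d by (intro ev_harm_sq) auto
  have "eventually (\<lambda>N. \<forall>g\<in>{2..G}. xp * (ln (real (N div g)))^2 \<le> Cop (N div g)
                 \<and> (1 - \<delta>) * (ln (real N))^2 \<le> (ln (real (N div g)))^2) sequentially"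
    using evg by (intro eventually_ball_finite) auto
  then have "eventually (\<lambda>N. Dd N \<le> 1 + \<delta> - (LL - \<delta>) * (1 - \<delta>) * (zz - \<delta>)) sequentially"
    using evh eventually_ge_at_top[of G] ev_ln_large[of 1]
  proof eventually_elim
    case (elim N)
    define Lg where "Lg = ln (real N)"
    define H where "H = (harm N :: real)^2"
    have Lg1: "1 \<le> Lg" using elim by (simp add: Lg_def)
    have GN: "G \<le> N" using elim by simp
    have s2: "(\<Sum>g\<in>{2..G}. xp * (1 - \<delta>) * Lg^2 * (1 / (real g)^2)) \<le> (\<Sum>g\<in>{2..G}. Cop (N div g) / (real g)^2)"
    proof (rule sum_mono)
      fix g assume g: "g \<in> {2..G}"
      have "xp * (1 - \<delta>) * Lg^2 = xp * ((1 - \<delta>) * Lg^2)" by simp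
      also have "\<dots> \<le> xp * (ln (real (N div g)))^2"
        using elim(1) g xp(1) unfolding Lg_def by (intro mult_left_mono) auto
      also have "\<dots> \<le> Cop (N div g)" using elim(1) g by auto
      finally show "xp * (1 - \<delta>) * Lg^2 * (1 / (real g)^2) \<le> Cop (N div g) / (real g)^2"
        by (simp add: divide_right_mono)
    qed
    have "(\<Sum>g\<in>{2..G}. xp * (1 - \<delta>) * Lg^2 * (1 / (real g)^2)) = xp * (1 - \<delta>) * Lg^2 * (\<Sum>g\<in>{2..G}. 1 / (real g)^2)"
      by (rule sum_distrib_left[symmetric])
    also have "\<dots> = xp * (1 - \<delta>) * Lg^2 * (sq G - 1)" using G by (simp only: sq_S2)
    finally have s2': "xp * (1 - \<delta>) * Lg^2 * (sq G - 1) \<le> (\<Sum>g\<in>{2..G}. Cop (N div g) / (real g)^2)"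
      using s2 by simp
    have s3: "0 \<le> (\<Sum>g\<in>{G<..N}. Cop (N div g) / (real g)^2)"
      by (intro sum_nonneg) (simp add: Cop_nonneg)
    have "H = Cop N + (\<Sum>g\<in>{2..G}. Cop (N div g) / (real g)^2) + (\<Sum>g\<in>{G<..N}. Cop (N div g) / (real g)^2)"
      unfolding H_def using G GN by (intro harm_identity_split) auto
    then have c1: "Cop N \<le> H - xp * (1 - \<delta>) * Lg^2 * (sq G - 1)" using s2' s3 by simp
    have c2: "H \<le> (1 + \<delta>) * Lg^2" using elim unfolding H_def Lg_def by simp
    have c3: "(LL - \<delta>) * (1 - \<delta>) * (zz - \<delta>) \<le> xp * (1 - \<delta>) * (sq G - 1)"
    proof -
      have a1: "zz - \<delta> \<le> sq G - 1" using G by (simp add: zz_def)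
      have "(LL - \<delta>) * ((1 - \<delta>) * (zz - \<delta>)) \<le> xp * ((1 - \<delta>) * (zz - \<delta>))"
        using xp d by (intro mult_right_mono) auto
      also have "\<dots> \<le> xp * ((1 - \<delta>) * (sq G - 1))"
        using xp d a1 by (intro mult_left_mono) auto
      finally show ?thesis by (simp add: mult.assoc)
    qed
    have c4: "(LL - \<delta>) * (1 - \<delta>) * (zz - \<delta>) * Lg^2 \<le> xp * (1 - \<delta>) * Lg^2 * (sq G - 1)"
      using mult_right_mono[OF c3, of "Lg^2"] by (simp add: mult_ac)
    have "Cop N \<le> (1 + \<delta> - (LL - \<delta>) * (1 - \<delta>) * (zz - \<delta>)) * Lg^2"
      using c1 c2 c4 by (simp add: algebra_simps)
    moreover have "0 < Lg^2" using Lg1 by simp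
    ultimately show ?case unfolding Dd_def Lg_def[symmetric] by (simp add: pos_divide_le_eq)
  qed
  then show ?thesis by (intro UU_lower) (simp add: Uset_def)
qed


lemma ev_small: "eventually (\<lambda>\<delta>::real. 0 < \<delta> \<and> \<delta> < 1 \<and> \<delta> \<le> zz) (at_right 0)"
  unfolding eventually_at_right_field
  by (rule exI[of _ "min 1 zz"]) (use zz_bounds in auto)

lemma A_lim: "1 - UU * zz \<le> LL"
proof (rule tendsto_upperbound)
  show "((\<lambda>\<delta>. 1 - \<delta> - (UU + \<delta>) * zz) \<longlongrightarrow> 1 - UU * zz) (at_right (0::real))"
    by (auto intro!: tendsto_eq_intros)
  show "eventually (\<lambda>\<delta>. 1 - \<delta> - (UU + \<delta>) * zz \<le> LL) (at_right 0)"
    using ev_small by eventually_elim (auto intro: lemmaA)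
qed simp

lemma B_lim: "UU \<le> 1 - LL * zz"
proof (rule tendsto_lowerbound)
  show "((\<lambda>\<delta>. 1 + \<delta> - (LL - \<delta>) * (1 - \<delta>) * (zz - \<delta>)) \<longlongrightarrow> 1 - LL * zz) (at_right (0::real))"
    by (auto intro!: tendsto_eq_intros)
  show "eventually (\<lambda>\<delta>. UU \<le> 1 + \<delta> - (LL - \<delta>) * (1 - \<delta>) * (zz - \<delta>)) (at_right 0)"
    using ev_small by eventually_elim (auto intro: lemmaB)
qed simp

lemma LL_ge: "6 / pi^2 \<le> LL"
proof -
  have z: "0 < zz" "zz < 1" by (rule zz_bounds)+
  have "UU * zz \<le> (1 - LL * zz) * zz" using B_lim z by (intro mult_right_mono) auto
  then have "1 - zz + LL * zz * zz \<le> LL" using A_lim by (simp add: algebra_simps)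
  then have "0 \<le> (1 - zz) * (LL * (1 + zz) - 1)" by (simp add: algebra_simps)
  then have "1 \<le> LL * (1 + zz)" using z by (simp add: zero_le_mult_iff)
  moreover have "1 + zz = pi^2 / 6" by (simp add: zz_def)
  ultimately show ?thesis by (simp add: field_simps)
qed

theorem Cop_density:
  assumes "0 < \<epsilon>"
  shows "eventually (\<lambda>N. (6 / pi^2 - \<epsilon>) * (ln (real N))^2 \<le> Cop N) sequentially"
  using LL_prop[of "LL - \<epsilon>"] assms eventually_ge_at_top[of 2]
proof -
  have e: "eventually (\<lambda>N. LL - \<epsilon> \<le> Dd N) sequentially" using LL_prop assms by simp
  show ?thesis using e eventually_ge_at_top[of 2]
  proof eventually_elim
    case (elim N)
    have "(6 / pi^2 - \<epsilon>) * (ln (real N))^2 \<le> Dd N * (ln (real N))^2"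
      using elim LL_ge by (intro mult_right_mono) auto
    also have "\<dots> = Cop N" using elim by (simp add: Cop_Dd)
    finally show ?case .
  qed
qed


definition Phi :: "nat \<Rightarrow> real" where
  "Phi K = arcsin (- 4 / real K) - arcsin (4 / real K - 1)"

lemma Phi_tends: "Phi \<longlonglongrightarrow> pi / 2"
proof -
  have inv: "(\<lambda>K. 4 / real K) \<longlonglongrightarrow> 0"
    by (intro tendsto_divide_0[OF tendsto_const] filterlim_at_top_imp_at_infinity[OF filterlim_real_sequentially])
  have t1: "(\<lambda>K. arcsin (- 4 / real K)) \<longlonglongrightarrow> arcsin 0"
  proof (rule continuous_on_tendsto_compose[OF continuous_on_arcsin'])
    show "(\<lambda>K. - 4 / real K) \<longlonglongrightarrow> 0" using tendsto_minus[OF inv] by simp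
    show "(0::real) \<in> {-1..1}" by simp
    show "\<forall>\<^sub>F K in sequentially. - 4 / real K \<in> {-1..1}"
      using eventually_ge_at_top[of 4] by eventually_elim (auto simp: field_simps)
  qed
  have t2: "(\<lambda>K. arcsin (4 / real K - 1)) \<longlonglongrightarrow> arcsin (- 1)"
  proof (rule continuous_on_tendsto_compose[OF continuous_on_arcsin'])
    show "(\<lambda>K. 4 / real K - 1) \<longlonglongrightarrow> - 1" using tendsto_diff[OF inv tendsto_const[of 1]] by simp
    show "(- 1::real) \<in> {-1..1}" by simp
    show "\<forall>\<^sub>F K in sequentially. 4 / real K - 1 \<in> {-1..1}"
      using eventually_ge_at_top[of 4] by eventually_elim (auto simp: field_simps)
  qed
  show ?thesis unfolding Phi_def using tendsto_diff[OF t1 t2] by simp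
qed

lemma sq_shift:
  fixes L c \<delta> :: real
  assumes "0 \<le> c" "0 < \<delta>" "\<delta> \<le> 1" "2 * c / \<delta> \<le> L" "0 \<le> L"
  shows "(1 - \<delta>) * L^2 \<le> (L - c)^2"
proof -
  have "2 * c \<le> \<delta> * L" using assms by (simp add: field_simps)
  then have "2 * c * L \<le> \<delta> * L * L" using assms by (intro mult_right_mono) auto
  then have "(1 - \<delta>) * L^2 \<le> L^2 - 2 * c * L" by (simp add: algebra_simps power2_eq_square)
  also have "\<dots> \<le> (L - c)^2" by (simp add: power2_eq_square algebra_simps)
  finally show ?thesis .
qed


definition AA :: "nat \<Rightarrow> nat \<Rightarrow> nat" where
  "AA K n = nat \<lfloor>sqrt (real n / real K)\<rfloor>"

lemma AA_props:
  fixes n K :: nat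
  assumes "1 \<le> K"
  shows "real (AA K n) \<le> sqrt (real n / real K)" "sqrt (real n / real K) < real (AA K n) + 1"
    "(real (AA K n))^2 \<le> real n / real K"
proof -
  have s0: "0 \<le> sqrt (real n / real K)" by simp
  have e: "real (AA K n) = of_int \<lfloor>sqrt (real n / real K)\<rfloor>" unfolding AA_def using s0 by simp
  show a: "real (AA K n) \<le> sqrt (real n / real K)" unfolding e by (rule of_int_floor_le)
  show "sqrt (real n / real K) < real (AA K n) + 1" unfolding e by (rule real_of_int_floor_add_one_gt)
  have "(real (AA K n))^2 \<le> (sqrt (real n / real K))^2" using a by (intro power_mono) auto
  then show "(real (AA K n))^2 \<le> real n / real K" using assms by simp
qed

lemma AA_lower:
  fixes n K :: nat
  assumes "1 \<le> K" "4 * K \<le> n"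
  shows "real n / real K \<le> 4 * (real (AA K n))^2" "1 \<le> AA K n"
proof -
  define s where "s = sqrt (real n / real K)"
  have "4 \<le> real n / real K" using assms by (simp add: field_simps)
  then have s2: "2 \<le> s" unfolding s_def by (metis real_sqrt_four real_sqrt_le_iff)
  have a1: "s < real (AA K n) + 1" using AA_props(2)[OF assms(1)] by (simp add: s_def)
  then have "s / 2 \<le> real (AA K n)" using s2 by simp
  then have "(s / 2)^2 \<le> (real (AA K n))^2" using s2 by (intro power_mono) auto
  moreover have "s^2 = real n / real K" unfolding s_def by simp
  ultimately show "real n / real K \<le> 4 * (real (AA K n))^2" by (simp add: power_divide)
  show "1 \<le> AA K n" using a1 s2 by linarith
qed

lemma AA_ev:
  fixes K M0 :: nat
  assumes "1 \<le> K"
  shows "eventually (\<lambda>n. M0 \<le> AA K n) sequentially"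
  unfolding eventually_sequentially
proof (intro exI allI impI)
  fix n assume n: "K * M0^2 \<le> n"
  have "real M0^2 \<le> real n / real K" using n assms
    by (simp add: field_simps) (metis of_nat_le_iff of_nat_mult of_nat_power mult.commute)
  then have "real M0 \<le> sqrt (real n / real K)" by (simp add: real_le_rsqrt)
  then have "int M0 \<le> \<lfloor>sqrt (real n / real K)\<rfloor>" by (simp add: le_floor_iff)
  then show "M0 \<le> AA K n" unfolding AA_def by simp
qed


lemma six_pi: "1/2 < 6 / pi^2"
proof -
  have "pi^2 / 6 - 1 < 1" using pi_sq_bounds(2) .
  then have "pi^2 < 12" by simp
  then show ?thesis by (simp add: field_simps)
qed

lemma T_bound_K:
  fixes n K :: nat
  assumes K: "16 \<le> K" and n: "4 * K \<le> n"
  shows "8 * Phi K * Cop (AA K n) \<le> T n"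
proof -
  define A where "A = AA K n"
  define h where "h = (n - 1) div 2"
  have K1: "1 \<le> K" using K by simp
  have Kr: "16 \<le> real K" using K by simp
  have nK: "4 * real K \<le> real n" using n by (metis of_nat_le_iff of_nat_mult of_nat_numeral)
  have npos: "0 < real n" using nK Kr by simp
  have A2: "(real A)^2 \<le> real n / real K" using AA_props(3)[OF K1] by (simp add: A_def)
  have A1: "1 \<le> A" using AA_lower(2)[OF K1 n] by (simp add: A_def)
  have nK1: "1 \<le> real n / real K" using nK Kr by (simp add: field_simps)
  have h2: "real n - 2 \<le> 2 * real h"
  proof -
    have "n - 2 \<le> 2 * h" unfolding h_def by linarith
    then have "real (n - 2) \<le> real (2 * h)" by (simp only: of_nat_le_iff)
    moreover have "real (n - 2) = real n - 2" using nK Kr by (simp add: of_nat_diff)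
    ultimately show ?thesis by simp
  qed
  have hA: "2 * A^2 \<le> (n - 1) div 2"
  proof -
    have "real n / real K \<le> real n / 16" using Kr npos by (intro divide_left_mono) auto
    then have "2 * (real A)^2 \<le> real h" using A2 h2 nK Kr by linarith
    then have "real (2 * A^2) \<le> real h" by simp
    then show ?thesis unfolding h_def by (simp only: of_nat_le_iff)
  qed
  have low: "8 * (FF n (real h - real (A^2)) - FF n (real (2 * A^2))) * Cop A \<le> T n"
    using T_lower[OF A1 hA] by (simp add: h_def)
  have f1: "arcsin (- 4 / real K) \<le> FF n (real h - real (A^2))"
  proof -
    have "FF n (real n / 2 - 2 * real n / real K) \<le> FF n (real h - real (A^2))"
    proof (rule FF_mono)
      show "0 \<le> real n / 2 - 2 * real n / real K" using Kr npos by (simp add: field_simps)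
      show "real n / 2 - 2 * real n / real K \<le> real h - real (A^2)"
      proof -
        have e: "2 * real n / real K = 2 * (real n / real K)" by simp
        have e2: "real (A^2) = (real A)^2" by simp
        show ?thesis using A2 h2 nK1 e e2 by linarith
      qed
      have "h \<le> n" unfolding h_def by linarith
      then have "real h \<le> real n" by (simp only: of_nat_le_iff)
      moreover have "0 \<le> real (A^2)" by simp
      ultimately show "real h - real (A^2) \<le> real n" by linarith
    qed (use npos in auto)
    moreover have "FF n (real n / 2 - 2 * real n / real K) = arcsin (- 4 / real K)"
      unfolding FF_def using npos Kr by (simp add: field_simps)
    ultimately show ?thesis by simp
  qed
  have f2: "FF n (real (2 * A^2)) \<le> arcsin (4 / real K - 1)"
  proof -
    have "FF n (real (2 * A^2)) \<le> FF n (2 * real n / real K)"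
    proof (rule FF_mono)
      show "real (2 * A^2) \<le> 2 * real n / real K" using A2 by simp
      show "2 * real n / real K \<le> real n" using Kr npos by (simp add: field_simps)
    qed (use npos in auto)
    moreover have "FF n (2 * real n / real K) = arcsin (4 / real K - 1)"
      unfolding FF_def using npos Kr by (simp add: field_simps)
    ultimately show ?thesis by simp
  qed
  have "Phi K \<le> FF n (real h - real (A^2)) - FF n (real (2 * A^2))"
    unfolding Phi_def using f1 f2 by simp
  then have "8 * Phi K * Cop A \<le> 8 * (FF n (real h - real (A^2)) - FF n (real (2 * A^2))) * Cop A"
    using Cop_nonneg by (intro mult_right_mono) auto
  with low show ?thesis by (simp add: A_def)
qed


lemma main_eps:
  assumes eps: "0 < \<epsilon>"
  shows "eventually (\<lambda>n. (6 / pi - \<epsilon>) * (ln (real n))^2 \<le> T n) sequentially"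
proof -
  define p where "p \<eta> = 8 * (pi / 2 - \<eta>) * (6 / pi^2 - \<eta>) * (1 / 4 - \<eta>)" for \<eta> :: real
  have p0: "p 0 = 6 / pi" unfolding p_def by (simp add: power2_eq_square field_simps)
  have pt: "(p \<longlongrightarrow> 6 / pi) (at_right 0)"
    unfolding p0[symmetric] p_def by (auto intro!: tendsto_eq_intros)
  have "eventually (\<lambda>\<eta>. 6 / pi - \<epsilon> < p \<eta>) (at_right 0)"
    using pt eps by (intro order_tendstoD(1)) auto
  moreover have "eventually (\<lambda>\<eta>::real. 0 < \<eta> \<and> \<eta> < 1 / 4) (at_right 0)"
    unfolding eventually_at_right_field by (rule exI[of _ "1/4"]) auto
  ultimately have "eventually (\<lambda>\<eta>. 6 / pi - \<epsilon> < p \<eta> \<and> 0 < \<eta> \<and> \<eta> < 1 / 4) (at_right 0)"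
    by (rule eventually_conj)
  then obtain b where b: "b > 0" "\<And>y. 0 < y \<Longrightarrow> y < b \<Longrightarrow> 6 / pi - \<epsilon> < p y \<and> 0 < y \<and> y < 1 / 4"
    unfolding eventually_at_right_field by auto
  define \<eta> where "\<eta> = b / 2"
  have eta: "6 / pi - \<epsilon> < p \<eta>" "0 < \<eta>" "\<eta> < 1 / 4" using b(2)[of \<eta>] b(1) by (auto simp: \<eta>_def)
  have "eventually (\<lambda>K. pi / 2 - \<eta> < Phi K) sequentially"
    using Phi_tends eta by (intro order_tendstoD(1)) auto
  then obtain K0 where K0: "\<And>K. K \<ge> K0 \<Longrightarrow> pi / 2 - \<eta> < Phi K" unfolding eventually_sequentially by blast
  define K where "K = max K0 16"
  have K: "16 \<le> K" "pi / 2 - \<eta> < Phi K" using K0[of K] by (auto simp: K_def)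
  have K1: "1 \<le> K" using K by simp
  define c where "c = ln (4 * real K)"
  have c0: "0 \<le> c" unfolding c_def using K by simp
  have six: "1/2 < 6 / pi^2" by (rule six_pi)
  obtain M0 where M0: "\<And>M. M \<ge> M0 \<Longrightarrow> (6 / pi^2 - \<eta>) * (ln (real M))^2 \<le> Cop M"
    using Cop_density[OF eta(2)] unfolding eventually_sequentially by blast
  have E2: "eventually (\<lambda>n. (6 / pi^2 - \<eta>) * (ln (real (AA K n)))^2 \<le> Cop (AA K n)) sequentially"
    using AA_ev[OF K1, of M0] by eventually_elim (rule M0)
  have E3: "eventually (\<lambda>n. max 0 (2 * c / (4 * \<eta>)) \<le> ln (real n)) sequentially"
    by (rule ev_ln_large)
  show ?thesis using E2 E3 eventually_ge_at_top[of "4 * K"]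
  proof eventually_elim
    case (elim n)
    define A where "A = AA K n"
    define Ln where "Ln = ln (real n)"
    have n: "4 * K \<le> n" using elim by simp
    have Ln: "0 \<le> Ln" "2 * c / (4 * \<eta>) \<le> Ln" using elim by (auto simp: Ln_def)
    have A1: "1 \<le> A" using AA_lower(2)[OF K1 n] by (simp add: A_def)
    have A4: "real n / real K \<le> 4 * (real A)^2" using AA_lower(1)[OF K1 n] by (simp add: A_def)
    have npos: "0 < real n" using n K by simp
    have lnA: "(Ln - c) / 2 \<le> ln (real A)"
    proof -
      have "real n / (4 * real K) \<le> (real A)^2" using A4 K by (simp add: field_simps)
      then have "ln (real n / (4 * real K)) \<le> ln ((real A)^2)" using npos K A1 by (subst ln_le_cancel_iff) auto
      also have "ln ((real A)^2) = 2 * ln (real A)" using A1 by (simp add: ln_realpow)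
      also have "ln (real n / (4 * real K)) = Ln - c" unfolding Ln_def c_def using npos K by (simp add: ln_div)
      finally show ?thesis by simp
    qed
    have Lc: "0 \<le> Ln - c"
    proof -
      have "2 * c \<le> 4 * \<eta> * Ln" using Ln(2) eta by (simp add: field_simps)
      moreover have "4 * \<eta> * Ln \<le> 1 * Ln" using eta Ln(1) by (intro mult_right_mono) auto
      ultimately show ?thesis using c0 by linarith
    qed
    have sq1: "(1 - 4 * \<eta>) * Ln^2 \<le> (Ln - c)^2"
      using c0 eta Ln by (intro sq_shift) auto
    have sq2: "(Ln - c)^2 / 4 \<le> (ln (real A))^2"
    proof -
      have "((Ln - c) / 2)^2 \<le> (ln (real A))^2" using lnA Lc by (intro power_mono) auto
      then show ?thesis by (simp add: power_divide)
    qed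
    have lnA2: "(1 / 4 - \<eta>) * Ln^2 \<le> (ln (real A))^2" using sq1 sq2 by (simp add: algebra_simps)
    have f1: "0 \<le> 8 * (pi / 2 - \<eta>)" using eta pi_gt3 by simp
    have f2: "0 \<le> 6 / pi^2 - \<eta>" using eta six by linarith
    have "(6 / pi - \<epsilon>) * Ln^2 \<le> p \<eta> * Ln^2" using eta(1) by (intro mult_right_mono) auto
    also have "\<dots> = 8 * (pi / 2 - \<eta>) * (6 / pi^2 - \<eta>) * ((1 / 4 - \<eta>) * Ln^2)"
      by (simp add: p_def mult.assoc)
    also have "\<dots> \<le> 8 * (pi / 2 - \<eta>) * (6 / pi^2 - \<eta>) * (ln (real A))^2"
      using f1 f2 lnA2 by (intro mult_left_mono mult_nonneg_nonneg) auto
    also have "\<dots> = 8 * (pi / 2 - \<eta>) * ((6 / pi^2 - \<eta>) * (ln (real A))^2)" by (simp add: mult.assoc)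
    also have "\<dots> \<le> 8 * (pi / 2 - \<eta>) * Cop A"
      using f1 elim(1) by (intro mult_left_mono) (auto simp: A_def)
    also have "\<dots> \<le> 8 * Phi K * Cop A"
      using K(2) Cop_nonneg by (intro mult_right_mono) auto
    also have "\<dots> \<le> T n" unfolding A_def by (rule T_bound_K[OF K(1) n])
    finally show ?case by (simp add: Ln_def)
  qed
qed


theorem lemma6p4:
  shows "\<exists>g :: nat \<Rightarrow> real. g \<longlonglongrightarrow> 0 \<and>
           (\<forall>\<^sub>F n in sequentially. T n \<ge> (6 + g n) / pi * (ln (real n))\<^sup>2)"
proof -
  define g where "g n = min 0 (T n * pi / (ln (real n))^2 - 6)" for n
  have conv: "g \<longlonglongrightarrow> 0"
    unfolding tendsto_iff
  proof (intro allI impI)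
    fix e :: real assume e: "0 < e"
    have "eventually (\<lambda>n. (6 / pi - e / (2 * pi)) * (ln (real n))^2 \<le> T n) sequentially"
      using e by (intro main_eps) simp
    then show "eventually (\<lambda>n. dist (g n) 0 < e) sequentially"
      using eventually_ge_at_top[of 2]
    proof eventually_elim
      case (elim n)
      have l: "0 < (ln (real n))^2" using elim by simp
      have "(6 / pi - e / (2 * pi)) * (ln (real n))^2 * pi / (ln (real n))^2 \<le> T n * pi / (ln (real n))^2"
        using elim(1) l by (intro divide_right_mono mult_right_mono) auto
      moreover have "(6 / pi - e / (2 * pi)) * (ln (real n))^2 * pi / (ln (real n))^2 = 6 - e / 2"
        using l by (simp add: field_simps)
      ultimately have "6 - e / 2 \<le> T n * pi / (ln (real n))^2" by simp
      then have "- (e / 2) \<le> g n" "g n \<le> 0" unfolding g_def using e by auto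
      then show ?case using e by (simp add: dist_real_def)
    qed
  qed
  have ev: "\<forall>\<^sub>F n in sequentially. T n \<ge> (6 + g n) / pi * (ln (real n))\<^sup>2"
    using eventually_ge_at_top[of 2]
  proof eventually_elim
    case (elim n)
    have l: "0 < (ln (real n))^2" using elim by simp
    have "g n \<le> T n * pi / (ln (real n))^2 - 6" unfolding g_def by simp
    then have "6 + g n \<le> T n * pi / (ln (real n))^2" by simp
    then have "(6 + g n) / pi * (ln (real n))^2 \<le> (T n * pi / (ln (real n))^2) / pi * (ln (real n))^2"
      using l by (intro mult_right_mono divide_right_mono) auto
    also have "\<dots> = T n" using l by (simp add: field_simps)
    finally show ?case .
  qed
  show ?thesis using conv ev by blast
qed

end
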